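(* For $n\ge1$ and $r\ge0$, the number of simple two-dimensional lattice paths of length $n$ with compactification degree $r$ is \[ 4^{r+1}\sum_{\lambda\ge0}\lambda(-1)^{\lambda-1}\bigg[\binom{2n-1}{n-\lambda2^r}-\binom{2n-1}{n-\lambda2^r-1}\bigg], \] where binomial coefficients with negative lower index are $0$.
   Context: A simple two-dimensional lattice path is a finite nonempty word over the steps $\{\uparrow,\rightarrow,\downarrow,\leftarrow\}$; its length is the number of steps. The reduction $\Phi_L(\ell)$ of a path $\ell$ of length $\ge2$ is defined as follows. First, if the first step of $\ell$ is vertical, the entire path is rotated by $90^\circ$ clockwise; then, if the last step of the resulting path is horizontal, this last step alone is rotated by $90^\circ$ clockwise. The resulting path starts with a horizontal and ends with a vertical step, so it decomposes uniquely as $H_1V_1H_2V_2\cdots H_kV_k$ ($k\ge1$), where each $H_i$ is a nonempty maximal run of horizontal steps and each $V_i$ a nonempty maximal run of vertical steps. Each block $H_iV_i$ is replaced by one diagonal step: $\nearrow$ if $H_i$ starts with $\rightarrow$ and $V_i$ starts with $\uparrow$; $\searrow$ if $H_i$ starts with $\rightarrow$ and $V_i$ with $\downarrow$; $\swarrow$ if $H_i$ starts with $\leftarrow$ and $V_i$ with $\downarrow$; $\nwarrow$ if $H_i$ starts with $\leftarrow$ and $V_i$ with $\uparrow$. Finally this diagonal path is rotated by $45^\circ$ clockwise, giving a simple lattice path $\Phi_L(\ell)$ of length $k$. The compactification degree $\mathrm{cdeg}(\ell)$ of a path $\ell$ of length $\ge1$ is the number $m\ge0$ such that $\Phi_L^m(\ell)$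 consists of a single step. *)

theory Defs
  imports Main
begin

datatype step = U | R | D | L

type_synonym path = "step list"

fun horiz :: "step \<Rightarrow> bool" where
  "horiz R = True" | "horiz L = True" | "horiz U = False" | "horiz D = False"

abbreviation vert :: "step \<Rightarrow> bool" where
  "vert s \<equiv> \<not> horiz s"

fun rot :: "step \<Rightarrow> step" where
  "rot U = R" | "rot R = D" | "rot D = L" | "rot L = U"

text \<open>Block H V (H starting with h, V starting with v) gives a diagonal step,
  which after rotation by 45 degrees clockwise becomes: NE -> R, SE -> D, SW -> L, NW -> U.\<close>
fun diag :: "step \<Rightarrow> step \<Rightarrow> step" where
  "diag R U = R" | "diag R D = D" | "diag L D = L" | "diag L U = U"
| "diag _ _ = U"

text \<open>Decompose a path H_1 V_1 ... H_k V_k into maximal runs and replace each block.\<close>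
function blocks :: "path \<Rightarrow> path" where
  "blocks [] = []"
| "blocks (h # xs) =
     (case dropWhile horiz (h # xs) of
        [] \<Rightarrow> []
      | v # ys \<Rightarrow> diag h v # blocks (dropWhile vert ys))"
  by pat_completeness auto
termination
proof (relation "measure length")
  fix h xs v ys
  assume "dropWhile horiz (h # xs) = v # ys"
  then have "length (v # ys) \<le> length (h # xs)"
    by (metis length_dropWhile_le)
  moreover have "length (dropWhile vert ys) \<le> length ys" by (rule length_dropWhile_le)
  ultimately show "(dropWhile vert ys, h # xs) \<in> measure length" by simp
qed auto

text \<open>The reduction Phi_L (meaningful for paths of length at least 2).\<close>
definition PhiL :: "path \<Rightarrow> path" where
  "PhiL l = (let l1 = (if vert (hd l) then map rot l else l);
                 l2 = (if horiz (last l1) then butlast l1 @ [rot (last l1)] else l1)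
             in blocks l2)"

definition cdeg :: "path \<Rightarrow> nat" where
  "cdeg l = (LEAST m. length ((PhiL ^^ m) l) = 1)"

definition binom :: "nat \<Rightarrow> int \<Rightarrow> int" where
  "binom a k = (if k < 0 then 0 else int (a choose nat k))"

end

theory Submission
  imports Defs "HOL-Computational_Algebra.Formal_Power_Series"
begin

unbundle fps_syntax


definition Ti :: "nat \<Rightarrow> nat \<Rightarrow> int" where
  "Ti n M = binom (2*n-1) (int n - int M) - binom (2*n-1) (int n - int M - 1)"

lemma binom_Suc: "binom (Suc a) k = binom a (k-1) + binom a k"
proof -
  consider "k < 0" | "k = 0" | "k > 0" by linarith
  then show ?thesis
  proof cases
    case 1 then show ?thesis by (simp add: binom_def)
  next
    case 2 then show ?thesis by (simp add: binom_def)
  next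
    case 3
    define j where "j = nat k - 1"
    have j: "k = int (Suc j)" using 3 unfolding j_def by simp
    have j2: "k - 1 = int j" using j by simp
    have j3: "nat (int (Suc j)) = Suc j" by (rule nat_int)
    show ?thesis unfolding j j2 binom_def
      by (simp only: j3 binomial_Suc_Suc) simp
  qed
qed

lemma binom_neg: "k < 0 \<Longrightarrow> binom a k = 0" by (simp add: binom_def)

lemma Ti_rec:
  assumes "n \<ge> 1" "M \<ge> 1"
  shows "Ti (Suc n) M = Ti n (M-1) + 2 * Ti n M + Ti n (M+1)"
proof -
  obtain a where a: "2*n-1 = a" by blast
  have a2: "2 * Suc n - 1 = Suc (Suc a)" using a assms by simp
  have e: "binom (Suc (Suc a)) k = binom a (k-2) + 2*binom a (k-1) + binom a k" for k
    by (simp add: binom_Suc algebra_simps)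
  have m: "int (M - 1) = int M - 1" using assms by simp
  show ?thesis unfolding Ti_def a2 a e m
    by (simp add: algebra_simps)
qed

lemma Ti_zero: "n \<ge> 1 \<Longrightarrow> Ti n 0 = 0"
proof -
  assume n: "n \<ge> 1"
  have "(2*n-1) choose n = (2*n-1) choose (n-1)"
    using binomial_symmetric[of "n-1" "2*n-1"] n by (simp add: algebra_simps)
  moreover have "nat (int n - 1) = n - 1" using n by simp
  ultimately show ?thesis using n by (simp add: Ti_def binom_def)
qed

lemma Ti_big: "M > n \<Longrightarrow> Ti n M = 0"
  by (simp add: Ti_def binom_def)

lemma Ti_one: "M \<ge> 1 \<Longrightarrow> Ti 1 M = (if M = 1 then 1 else 0)"
  by (auto simp: Ti_def binom_def)


abbreviation XX :: "rat fps" where "XX \<equiv> fps_X"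

definition Pf :: "rat fps" where "Pf = inverse ((1 + XX)^2)"
definition Uf :: "rat fps" where "Uf = fps_inv (XX * Pf)"

lemma Pf0: "Pf $ 0 = 1"
  by (simp add: Pf_def fps_power_zeroth)

lemma Pf_mult: "Pf * (1 + XX)^2 = 1"
  unfolding Pf_def by (rule inverse_mult_eq_1) (simp add: fps_power_zeroth)

lemma Uf0: "Uf $ 0 = 0"
  by (simp add: Uf_def fps_inv_def)

lemma Ueq: "Uf = XX * (1 + Uf)^2"
proof -
  have a0: "(XX * Pf) $ 0 = 0" by simp
  have a1: "(XX * Pf) $ 1 \<noteq> 0" by (simp add: Pf0)
  have h: "(XX * Pf) oo Uf = XX" unfolding Uf_def by (rule fps_inv_right[OF a0 a1])
  have "(XX * Pf) oo Uf = Uf * (Pf oo Uf)"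
    by (simp add: fps_compose_mult_distrib Uf0)
  with h have h1: "Uf * (Pf oo Uf) = XX" by simp
  have "(Pf * (1 + XX)^2) oo Uf = 1" by (simp add: Pf_mult)
  then have h2: "(Pf oo Uf) * (1 + Uf)^2 = 1"
    by (simp add: fps_compose_mult_distrib fps_compose_power[symmetric] fps_compose_add_distrib Uf0)
  have "Uf = Uf * ((Pf oo Uf) * (1 + Uf)^2)" by (simp add: h2)
  also have "\<dots> = (Uf * (Pf oo Uf)) * (1 + Uf)^2" by (simp add: mult.assoc)
  finally show ?thesis using h1 by simp
qed

lemma Upow_rec: "K \<ge> 1 \<Longrightarrow> Uf^K = XX * (Uf^(K-1) + 2 * Uf^K + Uf^(K+1))"
proof -
  assume "K \<ge> 1"
  then obtain j where K: "K = Suc j" by (cases K) auto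
  have "Uf^K = Uf^j * Uf" by (simp only: K power_Suc2)
  also have "\<dots> = Uf^j * (XX * (1 + Uf)^2)" by (rule arg_cong[OF Ueq, of "\<lambda>x. Uf^j * x"])
  also have "\<dots> = XX * (Uf^j + 2 * Uf^(Suc j) + Uf^(Suc (Suc j)))"
    by (simp only: power_Suc power2_eq_square) (simp add: algebra_simps)
  finally show ?thesis by (simp add: K)
qed

lemma nth3: fixes A B C :: "rat fps" shows "(A + 2 * B + C) $ m = A $ m + 2 * B $ m + C $ m"
  by (simp add: numeral_fps_const)

lemma Upow_nth_step: "K \<ge> 1 \<Longrightarrow> (Uf^K) $ Suc m = (Uf^(K-1)) $ m + 2 * (Uf^K) $ m + (Uf^(K+1)) $ m"
proof -
  assume K: "K \<ge> 1"
  have "(Uf^K) $ Suc m = (XX * (Uf^(K-1) + 2 * Uf^K + Uf^(K+1))) $ Suc m"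
    using Upow_rec[OF K] by (rule arg_cong[where f="\<lambda>F. F $ Suc m"])
  also have "\<dots> = (Uf^(K-1) + 2 * Uf^K + Uf^(K+1)) $ m" by (simp only: fps_X_mult_nth) simp
  finally show ?thesis by (simp only: nth3)
qed

lemma Upow_nth: "(Uf^K) $ Suc n = of_int (Ti (Suc n) K)"
proof (induction n arbitrary: K)
  case 0
  show ?case
  proof (cases "K = 0")
    case True then show ?thesis by (simp add: Ti_zero)
  next
    case False
    then have K: "K \<ge> 1" by simp
    have "(Uf^K) $ 1 = (Uf^(K-1)) $ 0 + 2 * (Uf^K) $ 0 + (Uf^(K+1)) $ 0"
      using Upow_nth_step[OF K, of 0] by simp
    also have "\<dots> = (if K = 1 then 1 else 0)"
      using K by (simp add: fps_power_zeroth Uf0 power_0_left)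
    finally show ?thesis using Ti_one[OF K] by simp
  qed
next
  case (Suc n)
  show ?case
  proof (cases "K = 0")
    case True then show ?thesis by (simp add: Ti_zero)
  next
    case False
    then have K: "K \<ge> 1" by simp
    have "(Uf^K) $ Suc (Suc n) = of_int (Ti (Suc n) (K-1)) + 2 * of_int (Ti (Suc n) K) + of_int (Ti (Suc n) (K+1))"
      by (simp only: Upow_nth_step[OF K] Suc.IH)
    also have "\<dots> = of_int (Ti (Suc (Suc n)) K)"
      using Ti_rec[of "Suc n" K] K by simp
    finally show ?thesis .
  qed
qed


fun KV :: "nat \<Rightarrow> nat \<Rightarrow> int" and KH :: "nat \<Rightarrow> nat \<Rightarrow> int" where
  "KV 0 k = (if k = 0 then 1 else 0)"
| "KH 0 k = 0"
| "KV (Suc n) k = 2 * KV n k + (if k = 0 then 0 else KH n (k-1))"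
| "KH (Suc n) k = 2 * KH n k + KV n k"

definition Ef :: "rat fps" where "Ef = inverse (1 - 2 * XX)"
definition tau :: "rat fps" where "tau = XX * Ef"
definition sig :: "rat fps" where "sig = tau^2"

lemma Ef_mult: "Ef * (1 - 2 * XX) = 1"
  unfolding Ef_def by (rule inverse_mult_eq_1) simp

definition HVf :: "nat \<Rightarrow> rat fps" where "HVf k = Abs_fps (\<lambda>n. of_int (KV n k))"
definition HHf :: "nat \<Rightarrow> rat fps" where "HHf k = Abs_fps (\<lambda>n. of_int (KH n k))"

lemma coeff_1m2X: "((1 - 2 * XX) * F) $ n = F $ n - (if n = 0 then 0 else 2 * F $ (n - 1))"
proof -
  have "(1 - 2 * XX) * F = F - 2 * (XX * F)" by (simp add: algebra_simps)
  then show ?thesis by (simp add: numeral_fps_const)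
qed

lemma solve: "(1 - 2 * XX) * F = G \<Longrightarrow> F = Ef * G"
proof -
  assume "(1 - 2 * XX) * F = G"
  then have "Ef * G = (Ef * (1 - 2 * XX)) * F" by (simp add: mult.assoc)
  then show ?thesis by (simp add: Ef_mult)
qed

lemma HV0: "(1 - 2 * XX) * HVf 0 = 1"
proof (rule fps_ext)
  fix n show "((1 - 2 * XX) * HVf 0) $ n = (1) $ n"
    by (cases n) (simp_all add: coeff_1m2X HVf_def)
qed

lemma HVS: "(1 - 2 * XX) * HVf (Suc k) = XX * HHf k"
proof (rule fps_ext)
  fix n show "((1 - 2 * XX) * HVf (Suc k)) $ n = (XX * HHf k) $ n"
    by (cases n) (simp_all add: coeff_1m2X HVf_def HHf_def)
qed

lemma HHk: "(1 - 2 * XX) * HHf k = XX * HVf k"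
proof (rule fps_ext)
  fix n show "((1 - 2 * XX) * HHf k) $ n = (XX * HVf k) $ n"
    by (cases n) (simp_all add: coeff_1m2X HVf_def HHf_def)
qed

lemma HVH_closed: "HVf k = tau^(2*k) * Ef \<and> HHf k = tau^(2*k+1) * Ef"
proof (induction k)
  case 0
  have v: "HVf 0 = Ef" using solve[OF HV0] by simp
  have "HHf 0 = Ef * (XX * HVf 0)" using solve[OF HHk] .
  then show ?case using v by (simp add: tau_def algebra_simps)
next
  case (Suc k)
  have v: "HVf (Suc k) = Ef * (XX * HHf k)" using solve[OF HVS] .
  then have v': "HVf (Suc k) = tau^(2*Suc k) * Ef"
    using Suc.IH by (simp add: tau_def algebra_simps power2_eq_square)
  have "HHf (Suc k) = Ef * (XX * HVf (Suc k))" using solve[OF HHk] .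
  then show ?case using v' by (simp add: tau_def algebra_simps)
qed

lemma sig_pow: "sig^(Suc j) = XX * HHf j"
proof -
  have e: "2 * Suc j = Suc (2*j+1)" by simp
  have "sig^(Suc j) = tau^(2 * Suc j)" by (simp only: sig_def power_mult)
  also have "\<dots> = tau^(2*j+1) * tau" by (simp only: e power_Suc2)
  also have "\<dots> = XX * (tau^(2*j+1) * Ef)" by (simp add: tau_def mult_ac)
  also have "\<dots> = XX * HHf j" using HVH_closed[of j] by simp
  finally show ?thesis .
qed

lemma sig_nth: "(sig^i) $ Suc m = (if i = 0 then 0 else of_int (KH m (i-1)))"
proof (cases i)
  case (Suc j)
  then show ?thesis by (simp only: Suc sig_pow) (simp add: HHf_def)
qed simp

lemma sig0: "sig $ 0 = 0"
  by (simp add: sig_def tau_def fps_power_zeroth)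


lemma fps_zero_if_rec:
  fixes Df Y :: "rat fps"
  assumes h: "Df = XX * (Df * Y)"
  shows "Df = 0"
proof -
  have "\<forall>k<n. Df $ k = 0" for n
  proof (induction n)
    case 0 then show ?case by simp
  next
    case (Suc n)
    have "Df $ n = 0"
    proof (cases n)
      case 0
      have "Df $ 0 = (XX * (Df * Y)) $ 0" using h by (rule arg_cong[where f="\<lambda>F. F $ 0"])
      then show ?thesis using 0 by simp
    next
      case (Suc m)
      have "Df $ Suc m = (XX * (Df * Y)) $ Suc m" using h by (rule arg_cong[where f="\<lambda>F. F $ Suc m"])
      also have "\<dots> = (Df * Y) $ m" by simp
      also have "\<dots> = (\<Sum>i=0..m. Df $ i * Y $ (m - i))" by (simp only: fps_mult_nth)
      also have "\<dots> = 0" using Suc.IH Suc by (intro sum.neutral) auto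
      finally show ?thesis using Suc by simp
    qed
    then show ?case using Suc.IH less_Suc_eq by auto
  qed
  then show ?thesis by (auto simp: fps_eq_iff)
qed

lemma sig_unique:
  fixes W1 W2 :: "rat fps"
  assumes h1: "W1 = sig * (1 + W1)^2" and h2: "W2 = sig * (1 + W2)^2"
  shows "W1 = W2"
proof -
  have "W1 - W2 = sig * (1 + W1)^2 - sig * (1 + W2)^2"
    using h1 h2 by (rule arg_cong2[where f="(-)"])
  also have "\<dots> = XX * ((W1 - W2) * (Ef * tau * (2 + W1 + W2)))"
    unfolding sig_def tau_def by (simp add: power2_eq_square algebra_simps)
  finally have "W1 - W2 = 0" by (rule fps_zero_if_rec)
  then show ?thesis by simp
qed

lemma V_eq: "(Uf oo sig) = sig * (1 + (Uf oo sig))^2"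
proof -
  have "Uf oo sig = (XX * (1 + Uf)^2) oo sig" using Ueq by (rule arg_cong[where f="\<lambda>F. F oo sig"])
  also have "\<dots> = (XX oo sig) * (((1 + Uf) oo sig)^2)"
    by (simp only: fps_compose_mult_distrib[OF sig0] fps_compose_power[OF sig0])
  also have "\<dots> = sig * (1 + (Uf oo sig))^2"
    by (simp only: fps_X_fps_compose_startby0[OF sig0] fps_compose_add_distrib fps_compose_1)
  finally show ?thesis .
qed

lemma U2_eq: "Uf^2 = sig * (1 + Uf^2)^2"
proof -
  have q: "XX * (1 + Uf)^2 = Uf" using Ueq by simp
  have "(1 + Uf)^2 * (1 - 2 * XX) = (1 + Uf)^2 - 2 * (XX * (1 + Uf)^2)"
    by (simp add: algebra_simps)
  also have "\<dots> = (1 + Uf)^2 - 2 * Uf" by (simp only: q)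
  also have "\<dots> = 1 + Uf^2" by (simp add: power2_eq_square algebra_simps)
  finally have p: "1 + Uf^2 = (1 + Uf)^2 * (1 - 2 * XX)" by simp
  have "sig * (1 + Uf^2)^2 = tau^2 * ((1 + Uf)^2 * (1 - 2 * XX))^2" by (simp only: sig_def p)
  also have "\<dots> = (XX * (1 + Uf)^2)^2 * (Ef * (1 - 2 * XX))^2"
    by (simp add: tau_def power_mult_distrib mult_ac)
  also have "\<dots> = Uf^2" by (simp only: q Ef_mult) simp
  finally show ?thesis by simp
qed

lemma U_sig: "Uf oo sig = Uf^2"
  using sig_unique[OF V_eq U2_eq] .

lemma I2_rat:
  assumes M: "M \<ge> 1"
  shows "(of_int (Ti (Suc m) (2*M)) :: rat) = (\<Sum>j=0..m. of_int (KH m j * Ti (Suc j) M))"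
proof -
  have "(of_int (Ti (Suc m) (2*M)) :: rat) = (Uf^(2*M)) $ Suc m" by (simp only: Upow_nth)
  also have "Uf^(2*M) = (Uf oo sig)^M" by (simp only: U_sig power_mult)
  also have "\<dots> = Uf^M oo sig" by (rule fps_compose_power[OF sig0])
  also have "(Uf^M oo sig) $ Suc m = (\<Sum>i=0..Suc m. (Uf^M) $ i * (sig^i) $ Suc m)"
    by (rule fps_compose_nth)
  also have "\<dots> = (Uf^M) $ 0 * (sig^0) $ Suc m + (\<Sum>i=0..m. (Uf^M) $ Suc i * (sig^Suc i) $ Suc m)"
    by (simp only: sum.atLeast0_atMost_Suc_shift o_def)
  also have "\<dots> = (\<Sum>j=0..m. of_int (KH m j * Ti (Suc j) M))"
    by (simp only: sig_nth Upow_nth) (simp add: mult.commute)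
  finally show ?thesis .
qed

lemma I2:
  assumes M: "M \<ge> 1"
  shows "Ti (Suc m) (2*M) = (\<Sum>j=0..m. KH m j * Ti (Suc j) M)"
proof -
  have "(of_int (Ti (Suc m) (2*M)) :: rat) = of_int (\<Sum>j=0..m. KH m j * Ti (Suc j) M)"
    using I2_rat[OF M] by simp
  then show ?thesis by (simp only: of_int_eq_iff)
qed

definition Gf :: "rat fps" where "Gf = Abs_fps (\<lambda>i. of_int (int i * (-1)^(i+1)))"

lemma Gf_mult: "Gf * (1 + XX)^2 = XX"
proof -
  have e: "Gf * (1 + XX)^2 = Gf + 2 * (XX * Gf) + XX * (XX * Gf)"
    by (simp add: power2_eq_square algebra_simps)
  show ?thesis
  proof (rule fps_ext)
    fix n
    have "(Gf + 2 * (XX * Gf) + XX * (XX * Gf)) $ n = XX $ n"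
    proof (cases n)
      case 0 then show ?thesis by (simp add: Gf_def numeral_fps_const)
    next
      case (Suc m)
      then show ?thesis
      proof (cases m)
        case 0 then show ?thesis using Suc by (simp add: Gf_def numeral_fps_const)
      next
        case (Suc k)
        have "(Gf + 2 * (XX * Gf) + XX * (XX * Gf)) $ n = of_int (int (k+2) * (-1)^(Suc (Suc (Suc k))) + 2 * (int (k+1) * (-1)^(Suc (Suc k))) + int k * (-1)^(Suc k))"
          using Suc \<open>n = Suc m\<close> by (simp add: Gf_def numeral_fps_const)
        also have "\<dots> = 0" by (simp add: algebra_simps)
        finally show ?thesis using Suc \<open>n = Suc m\<close> by simp
      qed
    qed
    then show "(Gf * (1 + XX)^2) $ n = XX $ n" by (simp only: e)
  qed
qed

lemma G_U: "Gf oo Uf = XX"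
proof -
  have "(Gf oo Uf) * (1 + Uf)^2 = (Gf * (1 + XX)^2) oo Uf"
    by (simp only: fps_compose_mult_distrib[OF Uf0] fps_compose_power[OF Uf0, symmetric] fps_compose_add_distrib
        fps_X_fps_compose_startby0[OF Uf0] fps_compose_1)
  also have "\<dots> = Uf" by (simp only: Gf_mult fps_X_fps_compose_startby0[OF Uf0])
  also have "\<dots> = XX * (1 + Uf)^2" by (rule Ueq)
  finally have "(Gf oo Uf) * (1 + Uf)^2 = XX * (1 + Uf)^2" .
  moreover have "(1 + Uf)^2 \<noteq> 0"
  proof
    assume "(1 + Uf)^2 = 0"
    then have "((1 + Uf)^2) $ 0 = 0" by simp
    then show False by (simp add: fps_power_zeroth Uf0)
  qed
  ultimately show ?thesis by simp
qed

lemma I1_rat: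
  "(\<Sum>i=0..Suc m. (of_int (int i * (-1)^(i+1) * Ti (Suc m) i) :: rat)) = (if m = 0 then 1 else 0)"
proof -
  have "(if m = 0 then 1 else 0) = (XX $ Suc m :: rat)" by simp
  also have "\<dots> = (Gf oo Uf) $ Suc m" by (simp only: G_U)
  also have "\<dots> = (\<Sum>i=0..Suc m. Gf $ i * (Uf^i) $ Suc m)" by (rule fps_compose_nth)
  also have "\<dots> = (\<Sum>i=0..Suc m. (of_int (int i * (-1)^(i+1) * Ti (Suc m) i) :: rat))"
    by (simp add: Gf_def Upow_nth)
  finally show ?thesis by simp
qed

lemma I1:
  assumes n: "n \<ge> 1"
  shows "(\<Sum>k\<in>{0..n}. int k * (-1) ^ (k - 1) * Ti n k) = (if n = 1 then 1 else 0)"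
proof -
  obtain m where m: "n = Suc m" using n by (cases n) auto
  have "(\<Sum>k\<in>{0..n}. int k * (-1) ^ (k - 1) * Ti n k) = (\<Sum>k\<in>{0..n}. int k * (-1) ^ (k + 1) * Ti n k)"
  proof (rule sum.cong)
    fix k assume "k \<in> {0..n}"
    show "int k * (-1) ^ (k - 1) * Ti n k = int k * (-1) ^ (k + 1) * Ti n k"
    proof (cases k)
      case (Suc j) then show ?thesis by simp
    qed simp
  qed simp
  moreover have "(of_int (\<Sum>k\<in>{0..n}. int k * (-1) ^ (k + 1) * Ti n k) :: rat) = (if n = 1 then 1 else 0)"
    using I1_rat[of m] m by simp
  ultimately show ?thesis
    by (metis (mono_tags, lifting) of_int_0 of_int_1 of_int_eq_iff)
qed


lemma UNIV_step: "(UNIV :: step set) = {U, R, D, L}"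
proof -
  have "x \<in> {U, R, D, L}" for x :: step by (cases x) auto
  then show ?thesis by blast
qed

instance step :: finite
  by standard (simp add: UNIV_step)

lemma sum_UNIV_step: "(\<Sum>x\<in>UNIV. g x) = g U + g R + g D + (g L :: int)"
  by (simp add: UNIV_step)

definition words :: "nat \<Rightarrow> path set" where "words n = {w. length w = n}"

lemma finite_words: "finite (words n)"
proof -
  have "words n = {xs. set xs \<subseteq> UNIV \<and> length xs = n}" by (auto simp: words_def)
  moreover have "finite {xs. set xs \<subseteq> (UNIV::step set) \<and> length xs = n}"
    by (rule finite_lists_length_eq) simp
  ultimately show ?thesis by simp
qed

lemma words_0: "words 0 = {[]}" by (auto simp: words_def)

lemma sum_words_Suc: "(\<Sum>w\<in>words (Suc n). f w) = (\<Sum>x\<in>UNIV. \<Sum>w\<in>words n. (f (x # w) :: int))"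
proof -
  have "(\<Sum>x\<in>UNIV. \<Sum>w\<in>words n. f (x # w)) = (\<Sum>(x,w)\<in>UNIV \<times> words n. f (x # w))"
    by (rule sum.cartesian_product)
  also have "\<dots> = (\<Sum>w\<in>words (Suc n). f w)"
    by (rule sum.reindex_bij_witness[where i="\<lambda>w. (hd w, tl w)" and j="\<lambda>(x,w). x # w"])
       (auto simp: words_def length_Suc_conv)
  finally show ?thesis by simp
qed

lemma sum_words_snoc: "(\<Sum>w\<in>words (Suc n). f w) = (\<Sum>x\<in>UNIV. \<Sum>w\<in>words n. (f (w @ [x]) :: int))"
proof -
  have "(\<Sum>x\<in>UNIV. \<Sum>w\<in>words n. f (w @ [x])) = (\<Sum>(x,w)\<in>UNIV \<times> words n. f (w @ [x]))"
    by (rule sum.cartesian_product)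
  also have "\<dots> = (\<Sum>w\<in>words (Suc n). f w)"
  proof (rule sum.reindex_bij_witness[where i="\<lambda>w. (last w, butlast w)" and j="\<lambda>(x,w). w @ [x]"])
    fix w assume "w \<in> words (Suc n)"
    then have "w \<noteq> []" by (auto simp: words_def)
    then show "(case (last w, butlast w) of (x, w) \<Rightarrow> w @ [x]) = w" by simp
  qed (auto simp: words_def)
  finally show ?thesis by simp
qed

fun outV :: "path \<Rightarrow> path option" and outH :: "step \<Rightarrow> path \<Rightarrow> path option" where
  "outV [] = Some []"
| "outV (x # w) = (if horiz x then outH x w else outV w)"
| "outH h [] = None"
| "outH h (x # w) = (if horiz x then outH h w else map_option (Cons (diag h x)) (outV w))"

definition opt :: "(path \<Rightarrow> int) \<Rightarrow> path option \<Rightarrow> int" where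
  "opt F q = (case q of None \<Rightarrow> 0 | Some p \<Rightarrow> F p)"

lemma opt_simps[simp]: "opt F None = 0" "opt F (Some p) = F p"
  "opt F (map_option (Cons c) q) = opt (\<lambda>p. F (c # p)) q"
  by (auto simp: opt_def split: option.splits)

definition SV :: "nat \<Rightarrow> (path \<Rightarrow> int) \<Rightarrow> int" where
  "SV n F = (\<Sum>w\<in>words n. opt F (outV w))"
definition SH :: "nat \<Rightarrow> step \<Rightarrow> (path \<Rightarrow> int) \<Rightarrow> int" where
  "SH n h F = (\<Sum>w\<in>words n. opt F (outH h w))"
definition PS :: "nat \<Rightarrow> (path \<Rightarrow> int) \<Rightarrow> int" where
  "PS n F = (\<Sum>w\<in>words n. F w)"

lemma SV_0: "SV 0 F = F []" by (simp add: SV_def words_0)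
lemma SH_0: "SH 0 h F = 0" by (simp add: SH_def words_0)

lemma SV_Suc: "SV (Suc n) F = 2 * SV n F + SH n R F + SH n L F"
  unfolding SV_def SH_def sum_words_Suc sum_UNIV_step by simp

lemma SH_Suc: "SH (Suc n) h F = 2 * SH n h F + SV n (\<lambda>p. F (diag h U # p)) + SV n (\<lambda>p. F (diag h D # p))"
  unfolding SV_def SH_def sum_words_Suc sum_UNIV_step by simp

lemma PS_Suc: "PS (Suc k) F = PS k (\<lambda>p. F (diag R U # p)) + PS k (\<lambda>p. F (diag R D # p))
   + PS k (\<lambda>p. F (diag L U # p)) + PS k (\<lambda>p. F (diag L D # p))"
  unfolding PS_def sum_words_Suc sum_UNIV_step by simp

lemma K_van: "k > n \<Longrightarrow> KV n k = 0 \<and> KH n k = 0"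
proof (induction n arbitrary: k)
  case 0 then show ?case by simp
next
  case (Suc n)
  then show ?case using Suc.IH[of k] Suc.IH[of "k-1"] by auto
qed

lemma sum_ext_KV: "n \<le> N \<Longrightarrow> (\<Sum>k\<le>N. KV n k * g k) = (\<Sum>k\<le>n. KV n k * g k)"
  by (rule sum.mono_neutral_right) (auto simp: K_van)
lemma sum_ext_KH: "n \<le> N \<Longrightarrow> (\<Sum>k\<le>N. KH n k * g k) = (\<Sum>k\<le>n. KH n k * g k)"
  by (rule sum.mono_neutral_right) (auto simp: K_van)

definition AA :: "step \<Rightarrow> nat \<Rightarrow> (path \<Rightarrow> int) \<Rightarrow> int" where
  "AA h k F = PS k (\<lambda>p. F (diag h U # p)) + PS k (\<lambda>p. F (diag h D # p))"

lemma AA_RL: "AA R k F + AA L k F = PS (Suc k) F"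
  unfolding AA_def PS_Suc by simp

lemma cnt: "SV n F = (\<Sum>k\<le>n. KV n k * PS k F) \<and> (\<forall>h. SH n h F = (\<Sum>k\<le>n. KH n k * AA h k F))"
proof (induction n arbitrary: F)
  case 0
  show ?case by (simp add: SV_0 SH_0 PS_def words_0)
next
  case (Suc n)
  have v: "SV (Suc n) F = (\<Sum>k\<le>Suc n. KV (Suc n) k * PS k F)"
  proof -
    have "SV (Suc n) F = 2 * (\<Sum>k\<le>n. KV n k * PS k F) + (\<Sum>k\<le>n. KH n k * PS (Suc k) F)"
      using Suc.IH[of F] by (simp add: SV_Suc AA_RL[symmetric] sum.distrib algebra_simps)
    also have "(\<Sum>k\<le>n. KV n k * PS k F) = (\<Sum>k\<le>Suc n. KV n k * PS k F)"
      by (rule sum_ext_KV[symmetric]) simp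
    also have "(\<Sum>k\<le>n. KH n k * PS (Suc k) F) = (\<Sum>k\<le>Suc n. (if k = 0 then 0 else KH n (k-1)) * PS k F)"
      by (simp only: sum.atMost_Suc_shift) simp
    also have "2 * (\<Sum>k\<le>Suc n. KV n k * PS k F) + (\<Sum>k\<le>Suc n. (if k = 0 then 0 else KH n (k-1)) * PS k F)
        = (\<Sum>k\<le>Suc n. KV (Suc n) k * PS k F)"
      by (simp add: sum_distrib_left sum.distrib[symmetric] algebra_simps)
    finally show ?thesis .
  qed
  have "SH (Suc n) h F = (\<Sum>k\<le>Suc n. KH (Suc n) k * AA h k F)" for h
  proof -
    have "SH (Suc n) h F = 2 * (\<Sum>k\<le>n. KH n k * AA h k F) + (\<Sum>k\<le>n. KV n k * AA h k F)"
      using Suc.IH[of F] Suc.IH[of "\<lambda>p. F (diag h U # p)"] Suc.IH[of "\<lambda>p. F (diag h D # p)"]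
      by (simp add: SH_Suc AA_def sum.distrib algebra_simps)
    also have "(\<Sum>k\<le>n. KH n k * AA h k F) = (\<Sum>k\<le>Suc n. KH n k * AA h k F)"
      by (rule sum_ext_KH[symmetric]) simp
    also have "(\<Sum>k\<le>n. KV n k * AA h k F) = (\<Sum>k\<le>Suc n. KV n k * AA h k F)"
      by (rule sum_ext_KV[symmetric]) simp
    also have "2 * (\<Sum>k\<le>Suc n. KH n k * AA h k F) + (\<Sum>k\<le>Suc n. KV n k * AA h k F)
        = (\<Sum>k\<le>Suc n. KH (Suc n) k * AA h k F)"
      by (simp add: sum_distrib_left sum.distrib[symmetric] algebra_simps)
    finally show ?thesis .
  qed
  with v show ?case by blast
qed


lemma out_blocks:
  "outV w = (if w = [] \<or> vert (last w) then Some (blocks (dropWhile vert w)) else None) \<and>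
   (\<forall>h. horiz h \<longrightarrow> outH h w = (if w \<noteq> [] \<and> vert (last w) then Some (blocks (h # w)) else None))"
proof (induction w)
  case Nil then show ?case by simp
next
  case (Cons x w)
  show ?case
  proof (cases "horiz x")
    case True
    then show ?thesis using Cons by auto
  next
    case False
    then show ?thesis using Cons by (auto split: list.splits)
  qed
qed

lemma outH_blocks: "horiz h \<Longrightarrow> w \<noteq> [] \<Longrightarrow> vert (last w) \<Longrightarrow> outH h w = Some (blocks (h # w))"
  using out_blocks by auto

lemma outH_None: "horiz h \<Longrightarrow> w \<noteq> [] \<Longrightarrow> horiz (last w) \<Longrightarrow> outH h w = None"
  using out_blocks by auto

lemma out_len:
  "(\<forall>p. outV w = Some p \<longrightarrow> 2 * length p \<le> length w) \<and>
   (\<forall>h p. outH h w = Some p \<longrightarrow> p \<noteq> [] \<and> 2 * length p \<le> Suc (length w))"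
proof (induction w)
  case Nil then show ?case by simp
next
  case (Cons x w)
  then show ?case by (cases "horiz x") (force simp: map_option_eq_Some)+
qed

definition fh :: "path \<Rightarrow> path" where "fh l = (if vert (hd l) then map rot l else l)"
definition fl :: "path \<Rightarrow> path" where
  "fl l = (if horiz (last l) then butlast l @ [rot (last l)] else l)"

lemma PhiL_eq: "PhiL l = blocks (fl (fh l))"
  by (simp add: PhiL_def fh_def fl_def Let_def)

definition rotinv :: "step \<Rightarrow> step" where "rotinv s = rot (rot (rot s))"

lemma rot_rotinv[simp]: "rot (rotinv s) = s" "rotinv (rot s) = s"
  by (cases s; simp add: rotinv_def)+

lemma sum_map_rot: "(\<Sum>w\<in>words k. g (map rot w)) = (\<Sum>w\<in>words k. (g w :: int))"
  by (rule sum.reindex_bij_witness[where i="map rotinv" and j="map rot"]) (auto simp: words_def o_def)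

lemma stepA: "(\<Sum>l\<in>words (Suc k). G (fh l)) = 2 * ((\<Sum>w\<in>words k. G (R # w)) + (\<Sum>w\<in>words k. (G (L # w) :: int)))"
proof -
  have "(\<Sum>l\<in>words (Suc k). G (fh l)) = (\<Sum>w\<in>words k. G (R # map rot w)) + (\<Sum>w\<in>words k. G (R # w))
      + (\<Sum>w\<in>words k. G (L # map rot w)) + (\<Sum>w\<in>words k. G (L # w))"
    unfolding sum_words_Suc sum_UNIV_step by (simp add: fh_def)
  also have "(\<Sum>w\<in>words k. G (R # map rot w)) = (\<Sum>w\<in>words k. G (R # w))"
    by (rule sum_map_rot)
  also have "(\<Sum>w\<in>words k. G (L # map rot w)) = (\<Sum>w\<in>words k. G (L # w))"
    by (rule sum_map_rot)
  finally show ?thesis by simp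
qed

lemma fl_snoc: "fl (h # v @ [y]) = h # v @ [if horiz y then rot y else y]"
  by (simp add: fl_def butlast_append)

lemma stepB: "(\<Sum>w\<in>words (Suc j). G (fl (h # w))) = 2 * (\<Sum>v\<in>words j. G (h # v @ [U]) + (G (h # v @ [D]) :: int))"
  unfolding sum_words_snoc sum_UNIV_step
  by (simp only: fl_snoc) (simp add: sum.distrib)

lemma SH_snoc: "horiz h \<Longrightarrow> SH (Suc j) h F = (\<Sum>v\<in>words j. F (blocks (h # v @ [U])) + F (blocks (h # v @ [D])))"
  unfolding SH_def sum_words_snoc sum_UNIV_step
  by (simp add: outH_blocks outH_None sum.distrib)

lemma sum_PhiL: "(\<Sum>l\<in>words (Suc (Suc j)). F (PhiL l)) = 4 * (SH (Suc j) R F + SH (Suc j) L F)"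
proof -
  have "(\<Sum>l\<in>words (Suc (Suc j)). F (PhiL l)) = (\<Sum>l\<in>words (Suc (Suc j)). (\<lambda>l. F (blocks (fl l))) (fh l))"
    by (simp add: PhiL_eq)
  also have "\<dots> = 2 * ((\<Sum>w\<in>words (Suc j). F (blocks (fl (R # w)))) + (\<Sum>w\<in>words (Suc j). F (blocks (fl (L # w)))))"
    by (rule stepA)
  also have "\<dots> = 4 * (SH (Suc j) R F + SH (Suc j) L F)"
    using stepB[where j=j and G="\<lambda>l. F (blocks l)" and h=R] SH_snoc[where h=R and j=j and F=F]
      stepB[where j=j and G="\<lambda>l. F (blocks l)" and h=L] SH_snoc[where h=L and j=j and F=F] by simp
  finally show ?thesis .
qed

lemma sum_PhiL_K:
  assumes "m \<ge> 1"
  shows "(\<Sum>l\<in>words (Suc m). F (PhiL l)) = 4 * (\<Sum>k\<le>m. KH m k * PS (Suc k) F)"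
proof -
  obtain j where m: "m = Suc j" using assms by (cases m) auto
  have "(\<Sum>l\<in>words (Suc m). F (PhiL l)) = 4 * (SH m R F + SH m L F)"
    unfolding m by (rule sum_PhiL)
  also have "SH m R F + SH m L F = (\<Sum>k\<le>m. KH m k * PS (Suc k) F)"
    using cnt[of m F] by (simp add: sum.distrib[symmetric] algebra_simps AA_RL[symmetric])
  finally show ?thesis .
qed

lemma fl_fh_shape:
  assumes "length l \<ge> 2"
  shows "\<exists>h w. horiz h \<and> w \<noteq> [] \<and> vert (last w) \<and> fl (fh l) = h # w"
proof -
  obtain x t where l: "l = x # t" using assms by (cases l) auto
  have t: "t \<noteq> []" using assms l by auto
  obtain v y where t2: "t = v @ [y]" using t by (metis append_butlast_last_id)
  show ?thesis
  proof (cases "horiz x")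
    case True
    then have "fl (fh l) = x # v @ [if horiz y then rot y else y]"
      by (simp add: l t2 fh_def fl_snoc)
    moreover have "vert (if horiz y then rot y else y)" by (cases y) auto
    ultimately show ?thesis using True by auto
  next
    case False
    then have "fh l = rot x # map rot v @ [rot y]" by (simp add: l t2 fh_def)
    then have "fl (fh l) = rot x # map rot v @ [if horiz (rot y) then rot (rot y) else rot y]"
      by (simp add: fl_snoc)
    moreover have "vert (if horiz (rot y) then rot (rot y) else rot y)" by (cases y) auto
    moreover have "horiz (rot x)" using False by (cases x) auto
    ultimately show ?thesis by auto
  qed
qed

lemma PhiL_len:
  assumes "length l \<ge> 2"
  shows "length (PhiL l) \<ge> 1 \<and> length (PhiL l) < length l"
proof -
  obtain h w where hw: "horiz h" "w \<noteq> []" "vert (last w)" "fl (fh l) = h # w"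
    using fl_fh_shape[OF assms] by blast
  have len: "length (fl (fh l)) = length l"
    using assms by (auto simp: fl_def fh_def)
  have "outH h w = Some (PhiL l)" using hw by (simp add: outH_blocks PhiL_eq)
  then have "PhiL l \<noteq> [] \<and> 2 * length (PhiL l) \<le> Suc (length w)" using out_len by blast
  moreover have "Suc (length w) = length l" using len hw(4) by simp
  ultimately show ?thesis using assms by (cases "PhiL l") auto
qed

lemma cdeg_ex: "length l \<ge> 1 \<Longrightarrow> \<exists>m. length ((PhiL ^^ m) l) = 1"
proof (induction "length l" arbitrary: l rule: less_induct)
  case less
  show ?case
  proof (cases "length l = 1")
    case True
    then show ?thesis by (metis funpow_0)
  next
    case False
    then have "length l \<ge> 2" using less.prems by simp
    then have "length (PhiL l) \<ge> 1" "length (PhiL l) < length l" using PhiL_len by auto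
    then obtain m where "length ((PhiL ^^ m) (PhiL l)) = 1" using less.hyps by blast
    then have "length ((PhiL ^^ Suc m) l) = 1" by (simp only: funpow_Suc_right o_apply)
    then show ?thesis by blast
  qed
qed

lemma cdeg_1: "length l = 1 \<Longrightarrow> cdeg l = 0"
  by (simp add: cdeg_def)

lemma cdeg_Suc:
  assumes "length l \<ge> 2"
  shows "cdeg l = Suc (cdeg (PhiL l))"
proof -
  obtain m where m: "length ((PhiL ^^ m) l) = 1" using cdeg_ex assms by fastforce
  have "cdeg l = Suc (LEAST m. length ((PhiL ^^ Suc m) l) = 1)"
    unfolding cdeg_def by (rule Least_Suc[where P="\<lambda>m. length ((PhiL ^^ m) l) = 1", OF m]) (use assms in simp)
  also have "(\<lambda>m. length ((PhiL ^^ Suc m) l) = 1) = (\<lambda>m. length ((PhiL ^^ m) (PhiL l)) = 1)"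
    by (simp only: funpow_Suc_right o_apply)
  finally show ?thesis by (simp add: cdeg_def)
qed


definition Af :: "nat \<Rightarrow> nat \<Rightarrow> int" where
  "Af n r = PS n (\<lambda>p. if cdeg p = r then 1 else 0)"

definition Sn :: "nat \<Rightarrow> nat \<Rightarrow> int" where
  "Sn n r = (\<Sum>k\<in>{0..n}. int k * (-1)^(k-1) * Ti n (k * 2^r))"

lemma card_Af: "int (card {l :: path. length l = n \<and> cdeg l = r}) = Af n r"
proof -
  have "{l :: path. length l = n \<and> cdeg l = r} = {l \<in> words n. cdeg l = r}" by (auto simp: words_def)
  then have "int (card {l :: path. length l = n \<and> cdeg l = r}) = (\<Sum>l\<in>{l \<in> words n. cdeg l = r}. 1)"
    by simp
  also have "\<dots> = (\<Sum>l\<in>words n. if cdeg l = r then 1 else 0)"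
    by (rule sum.inter_filter[OF finite_words])
  finally show ?thesis by (simp add: Af_def PS_def)
qed

lemma Af_1: "Af 1 r = (if r = 0 then 4 else 0)"
proof -
  have "Af 1 r = (\<Sum>x\<in>UNIV. if cdeg [x] = r then 1 else 0)"
    unfolding Af_def PS_def One_nat_def sum_words_Suc words_0 by simp
  also have "\<dots> = (if r = 0 then 4 else 0)"
    unfolding sum_UNIV_step by (simp add: cdeg_1)
  finally show ?thesis .
qed

lemma Af_0: "n \<ge> 2 \<Longrightarrow> Af n 0 = 0"
  unfolding Af_def PS_def by (rule sum.neutral) (auto simp: words_def cdeg_Suc)

lemma Af_Suc:
  assumes "m \<ge> 1"
  shows "Af (Suc m) (Suc r) = 4 * (\<Sum>k\<le>m. KH m k * Af (Suc k) r)"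
proof -
  have "Af (Suc m) (Suc r) = (\<Sum>l\<in>words (Suc m). (\<lambda>p. if cdeg p = r then 1 else 0) (PhiL l))"
    unfolding Af_def PS_def
    by (rule sum.cong) (use assms in \<open>auto simp: words_def cdeg_Suc\<close>)
  also have "\<dots> = 4 * (\<Sum>k\<le>m. KH m k * PS (Suc k) (\<lambda>p. if cdeg p = r then 1 else 0))"
    by (rule sum_PhiL_K[OF assms])
  finally show ?thesis by (simp add: Af_def)
qed

lemma Sn_0: "n \<ge> 1 \<Longrightarrow> Sn n 0 = (if n = 1 then 1 else 0)"
  using I1 by (simp add: Sn_def)

lemma Sn_1_Suc: "Sn 1 (Suc r) = 0"
proof -
  have "Ti 1 (2 ^ Suc r) = 0"
  proof (rule Ti_big)
    show "1 < (2::nat) ^ Suc r" using one_less_power[of "2::nat" "Suc r"] by simp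
  qed
  then show ?thesis by (simp add: Sn_def)
qed

lemma Sn_Suc:
  shows "Sn (Suc m) (Suc r) = (\<Sum>j\<le>m. KH m j * Sn (Suc j) r)"
proof -
  have "Sn (Suc m) (Suc r) = (\<Sum>k\<in>{0..Suc m}. \<Sum>j\<in>{0..m}. KH m j * (int k * (-1)^(k-1) * Ti (Suc j) (k * 2^r)))"
    unfolding Sn_def
  proof (rule sum.cong)
    fix k assume "k \<in> {0..Suc m}"
    show "int k * (-1)^(k-1) * Ti (Suc m) (k * 2^Suc r) =
        (\<Sum>j\<in>{0..m}. KH m j * (int k * (-1)^(k-1) * Ti (Suc j) (k * 2^r)))"
    proof (cases "k = 0")
      case False
      then have M: "k * 2^r \<ge> 1" by simp
      have e: "k * 2^Suc r = 2 * (k * 2^r)" by simp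
      show ?thesis unfolding e I2[OF M] by (simp add: sum_distrib_left algebra_simps)
    qed simp
  qed simp
  also have "\<dots> = (\<Sum>j\<in>{0..m}. KH m j * (\<Sum>k\<in>{0..Suc m}. int k * (-1)^(k-1) * Ti (Suc j) (k * 2^r)))"
    by (simp only: sum_distrib_left) (rule sum.swap)
  also have "\<dots> = (\<Sum>j\<in>{0..m}. KH m j * Sn (Suc j) r)"
  proof (rule sum.cong)
    fix j assume j: "j \<in> {0..m}"
    have "(\<Sum>k\<in>{0..Suc m}. int k * (-1)^(k-1) * Ti (Suc j) (k * 2^r)) =
          (\<Sum>k\<in>{0..Suc j}. int k * (-1)^(k-1) * Ti (Suc j) (k * 2^r))"
    proof (rule sum.mono_neutral_right)
      show "{0..Suc j} \<subseteq> {0..Suc m}" using j by auto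
      show "\<forall>i\<in>{0..Suc m} - {0..Suc j}. int i * (- 1) ^ (i - 1) * Ti (Suc j) (i * 2 ^ r) = 0"
      proof
        fix i assume i: "i \<in> {0..Suc m} - {0..Suc j}"
        have h: "i * 1 \<le> i * 2^r" by (rule mult_le_mono2) simp
        have i2: "i > Suc j" using i by auto
        have "i * 2^r > Suc j" using h i2 by linarith
        then show "int i * (- 1) ^ (i - 1) * Ti (Suc j) (i * 2 ^ r) = 0" by (simp add: Ti_big)
      qed
    qed simp
    then show "KH m j * (\<Sum>k\<in>{0..Suc m}. int k * (-1)^(k-1) * Ti (Suc j) (k * 2^r)) = KH m j * Sn (Suc j) r"
      by (simp add: Sn_def)
  qed simp
  finally show ?thesis by (simp add: atLeast0AtMost)
qed

lemma main: "n \<ge> 1 \<Longrightarrow> Af n r = 4^(r+1) * Sn n r"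
proof (induction r arbitrary: n)
  case 0
  show ?case
  proof (cases "n = 1")
    case True then show ?thesis using Af_1[of 0] Sn_0[of 1] by simp
  next
    case False then show ?thesis using 0 by (simp add: Af_0 Sn_0)
  qed
next
  case (Suc r)
  show ?case
  proof (cases "n = 1")
    case True then show ?thesis using Af_1[of "Suc r"] Sn_1_Suc[of r] by simp
  next
    case False
    then obtain m where n: "n = Suc m" and m: "m \<ge> 1" using Suc.prems by (cases n) auto
    have "Af n (Suc r) = 4 * (\<Sum>k\<le>m. KH m k * Af (Suc k) r)" unfolding n by (rule Af_Suc[OF m])
    also have "\<dots> = 4 * (\<Sum>k\<le>m. KH m k * (4^(r+1) * Sn (Suc k) r))"
      using Suc.IH by simp
    also have "\<dots> = 4^(Suc r + 1) * Sn n (Suc r)"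
      unfolding n Sn_Suc by (simp add: sum_distrib_left algebra_simps)
    finally show ?thesis .
  qed
qed

theorem proposition5:
  fixes n r :: nat
  assumes "n \<ge> 1"
  shows "int (card {l :: path. length l = n \<and> cdeg l = r}) =
         4 ^ (r + 1) * (\<Sum>k\<in>{0..n}. int k * (-1) ^ (k - 1) *
            (binom (2 * n - 1) (int n - int k * 2 ^ r)
             - binom (2 * n - 1) (int n - int k * 2 ^ r - 1)))"
proof -
  have "int (card {l :: path. length l = n \<and> cdeg l = r}) = 4^(r+1) * Sn n r"
    using card_Af main[OF assms] by simp
  also have "Sn n r = (\<Sum>k\<in>{0..n}. int k * (-1) ^ (k - 1) *
            (binom (2 * n - 1) (int n - int k * 2 ^ r)
             - binom (2 * n - 1) (int n - int k * 2 ^ r - 1)))"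
    unfolding Sn_def Ti_def by simp
  finally show ?thesis .
qed

end
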